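(* Let $\mathbb{K}\in\{\mathbb{R},\mathbb{C}\}$ and let $\mathcal{X}$ be a topological $\mathbb{K}$-vector space whose topological dual $\mathcal{X}^{\ast}$ separates the points of $\mathcal{X}$. Then the map $\overline{\mathrm{co}}:\mathbf{F}(\mathcal{X}^{\ast})\to\mathbf{CF}(\mathcal{X}^{\ast})$, $F\mapsto\overline{\mathrm{co}}F$, is surjective and continuous, both spaces being endowed with the weak*-Hausdorff hypertopology.
   Context: Topological vector spaces are Hausdorff. $\mathcal{X}^{\ast}$ carries the weak* topology. $\mathbf{F}(\mathcal{X}^{\ast})$ is the set of nonempty weak*-closed subsets of $\mathcal{X}^{\ast}$, $\mathbf{CF}(\mathcal{X}^{\ast})$ the subset of convex ones, and $\overline{\mathrm{co}}F$ is the weak*-closure of the convex hull of $F$. The weak*-Hausdorff hypertopology on $\mathbf{F}(\mathcal{X}^{\ast})$ (and its subspaces) is the topology generated by the extended pseudometrics $d_H^{(A)}(F,\tilde F)=\max\{\sup_{\sigma\in F}\inf_{\tilde\sigma\in\tilde F}|(\sigma-\tilde\sigma)(A)|,\ \sup_{\tilde\sigma\in\tilde F}\inf_{\sigma\in F}|(\sigma-\tilde\sigma)(A)|\}\in[0,\infty]$, $A\in\mathcal{X}$. *)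

theory Defs
  imports "HOL-Analysis.Analysis"
begin

text \<open>Topological K-vector space structure on a type 'x whose (Hausdorff) topology is
  the class topology and whose additive group is the class group, with scalar
  multiplication smul over the scalar field 'k (instantiated with real / complex).\<close>

definition tvs :: "('k::real_normed_field \<Rightarrow> 'x::{ab_group_add,t2_space} \<Rightarrow> 'x) \<Rightarrow> bool" where
  "tvs smul \<longleftrightarrow>
     (\<forall>a x y. smul a (x + y) = smul a x + smul a y) \<and>
     (\<forall>a b x. smul (a + b) x = smul a x + smul b x) \<and>
     (\<forall>a b x. smul a (smul b x) = smul (a * b) x) \<and>
     (\<forall>x. smul 1 x = x) \<and>
     continuous_on UNIV (\<lambda>p::'x \<times> 'x. fst p + snd p) \<and>
     continuous_on UNIV (\<lambda>p::'k \<times> 'x. smul (fst p) (snd p))"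

definition tdual :: "('k::real_normed_field \<Rightarrow> 'x::{ab_group_add,t2_space} \<Rightarrow> 'x) \<Rightarrow> ('x \<Rightarrow> 'k) set" where
  "tdual smul = {\<sigma>. (\<forall>x y. \<sigma> (x + y) = \<sigma> x + \<sigma> y) \<and> (\<forall>a x. \<sigma> (smul a x) = a * \<sigma> x)
                     \<and> continuous_on UNIV \<sigma>}"

definition dual_separates :: "('k::real_normed_field \<Rightarrow> 'x::{ab_group_add,t2_space} \<Rightarrow> 'x) \<Rightarrow> bool" where
  "dual_separates smul \<longleftrightarrow> (\<forall>x y. x \<noteq> y \<longrightarrow> (\<exists>\<sigma>\<in>tdual smul. \<sigma> x \<noteq> \<sigma> y))"

definition weak_star :: "('k::real_normed_field \<Rightarrow> 'x::{ab_group_add,t2_space} \<Rightarrow> 'x) \<Rightarrow> ('x \<Rightarrow> 'k) topology" where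
  "weak_star smul = subtopology (product_topology (\<lambda>_. euclidean) UNIV) (tdual smul)"

definition fconvex :: "('x \<Rightarrow> 'k::real_normed_field) set \<Rightarrow> bool" where
  "fconvex C \<longleftrightarrow> (\<forall>\<sigma>\<in>C. \<forall>\<tau>\<in>C. \<forall>t::real. 0 \<le> t \<and> t \<le> 1 \<longrightarrow>
       (\<lambda>x. of_real t * \<sigma> x + of_real (1 - t) * \<tau> x) \<in> C)"

definition dual_co :: "('k::real_normed_field \<Rightarrow> 'x::{ab_group_add,t2_space} \<Rightarrow> 'x) \<Rightarrow> ('x \<Rightarrow> 'k) set \<Rightarrow> ('x \<Rightarrow> 'k) set" where
  "dual_co smul F = \<Inter>{C. C \<subseteq> tdual smul \<and> fconvex C \<and> F \<subseteq> C}"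

definition clco :: "('k::real_normed_field \<Rightarrow> 'x::{ab_group_add,t2_space} \<Rightarrow> 'x) \<Rightarrow> ('x \<Rightarrow> 'k) set \<Rightarrow> ('x \<Rightarrow> 'k) set" where
  "clco smul F = (weak_star smul) closure_of (dual_co smul F)"

definition Fsets :: "('k::real_normed_field \<Rightarrow> 'x::{ab_group_add,t2_space} \<Rightarrow> 'x) \<Rightarrow> ('x \<Rightarrow> 'k) set set" where
  "Fsets smul = {F. F \<noteq> {} \<and> closedin (weak_star smul) F}"

definition CFsets :: "('k::real_normed_field \<Rightarrow> 'x::{ab_group_add,t2_space} \<Rightarrow> 'x) \<Rightarrow> ('x \<Rightarrow> 'k) set set" where
  "CFsets smul = {F. F \<in> Fsets smul \<and> fconvex F}"

definition dH :: "'x \<Rightarrow> ('x \<Rightarrow> 'k::real_normed_field) set \<Rightarrow> ('x \<Rightarrow> 'k) set \<Rightarrow> ereal" where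
  "dH A F G = max (SUP \<sigma>\<in>F. INF \<tau>\<in>G. ereal (norm (\<sigma> A - \<tau> A)))
                  (SUP \<tau>\<in>G. INF \<sigma>\<in>F. ereal (norm (\<sigma> A - \<tau> A)))"

definition hyper_top :: "('x \<Rightarrow> 'k::real_normed_field) set set \<Rightarrow> ('x \<Rightarrow> 'k) set topology" where
  "hyper_top S = topology_generated_by
     {{G \<in> S. dH A F G < ereal \<epsilon>} | F A \<epsilon>. F \<in> S \<and> \<epsilon> > 0}"

end

theory Submission imports Defs begin

definition exc :: "'k::real_normed_field set \<Rightarrow> 'k set \<Rightarrow> ereal" where
 "exc P Q = (SUP a\<in>P. INF b\<in>Q. ereal (norm (a - b)))"

lemma INF_infdist:
  fixes Q :: "'k::real_normed_field set"
  assumes "Q \<noteq> {}"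
  shows "(INF b\<in>Q. ereal (norm (a - b))) = ereal (infdist a Q)"
proof -
  have "ereal (Inf (dist a ` Q)) = (INF x\<in>dist a ` Q. ereal x)"
    by (rule ereal_Inf') (use assms in auto)
  then show ?thesis using assms by (simp add: infdist_notempty image_comp dist_norm o_def)
qed

lemma exc_infdist: "Q \<noteq> {} \<Longrightarrow> exc P Q = (SUP a\<in>P. ereal (infdist a Q))"
  unfolding exc_def by (simp add: INF_infdist)

lemma exc_nonneg: "P \<noteq> {} \<Longrightarrow> 0 \<le> exc P Q"
proof -
  assume "P \<noteq> {}" then obtain a where a: "a \<in> P" by auto
  have "0 \<le> (INF b\<in>Q. ereal (norm (a - b)))" by (rule INF_greatest) simp
  also have "\<dots> \<le> exc P Q" unfolding exc_def using a by (rule SUP_upper)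
  finally show ?thesis .
qed

lemma exc_self: "exc P P \<le> 0"
  unfolding exc_def
proof (rule SUP_least)
  fix a assume "a \<in> P"
  then have "(INF b\<in>P. ereal (norm (a - b))) \<le> ereal (norm (a - a))" by (rule INF_lower)
  then show "(INF b\<in>P. ereal (norm (a - b))) \<le> 0" by (simp add: zero_ereal_def)
qed

lemma infdist_ge:
  assumes "Q \<noteq> {}" "\<And>b. b \<in> Q \<Longrightarrow> c \<le> dist a b"
  shows "c \<le> infdist a Q"
  using assms by (simp add: infdist_notempty cINF_greatest)

lemma exc_triangle:
  fixes P Q R :: "'k::real_normed_field set"
  assumes Q: "Q \<noteq> {}"
  shows "exc P R \<le> exc P Q + exc Q R"
proof (cases "P = {}")
  case True then show ?thesis by (simp add: exc_def)
next
  case P: False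
  have PQ: "0 \<le> exc P Q" using P by (rule exc_nonneg)
  show ?thesis
  proof (cases "R = {}")
    case True
    then have "exc Q R = \<infinity>" using Q by (simp add: exc_def top_ereal_def)
    then show ?thesis using PQ by simp
  next
    case R: False
    show ?thesis
    proof (cases "exc Q R = \<infinity>")
      case True then show ?thesis using PQ by simp
    next
      case False
      have "0 \<le> exc Q R" using Q by (rule exc_nonneg)
      with False obtain q where q: "exc Q R = ereal q" by (cases "exc Q R") auto
      have "ereal (infdist a R) \<le> exc P Q + ereal q" if a: "a \<in> P" for a
      proof -
        have "infdist a R - q \<le> infdist a Q"
        proof (rule infdist_ge[OF Q])
          fix b assume b: "b \<in> Q"
          have "ereal (infdist b R) \<le> exc Q R"
            unfolding exc_infdist[OF R] using b by (rule SUP_upper)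
          then have "infdist b R \<le> q" using q by simp
          moreover have "infdist a R \<le> infdist b R + dist a b" by (rule infdist_triangle)
          ultimately show "infdist a R - q \<le> dist a b" by simp
        qed
        then have "ereal (infdist a R) \<le> ereal (infdist a Q) + ereal q" by simp
        also have "ereal (infdist a Q) \<le> exc P Q"
          unfolding exc_infdist[OF Q] using a by (rule SUP_upper)
        finally show ?thesis by (simp add: add_right_mono)
      qed
      then have "exc P R \<le> exc P Q + ereal q"
        unfolding exc_infdist[OF R] by (rule SUP_least)
      then show ?thesis using q by simp
    qed
  qed
qed

lemma convex_infdist_le:
  fixes C :: "'k::real_normed_field set"
  assumes C: "convex C" "C \<noteq> {}"
  shows "convex {x. infdist x C \<le> d}"
proof (rule convexI)
  fix x y :: 'k and u v :: real
  assume x: "x \<in> {x. infdist x C \<le> d}" and y: "y \<in> {x. infdist x C \<le> d}"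
    and u: "0 \<le> u" and v: "0 \<le> v" and uv: "u + v = 1"
  have "infdist (u *\<^sub>R x + v *\<^sub>R y) C \<le> d + e" if e: "e > 0" for e
  proof -
    have "(INF b\<in>C. dist x b) < d + e" using x e C by (simp add: infdist_notempty)
    then obtain b1 where b1: "b1 \<in> C" "dist x b1 < d + e"
      using C by (subst (asm) cINF_less_iff) auto
    have "(INF b\<in>C. dist y b) < d + e" using y e C by (simp add: infdist_notempty)
    then obtain b2 where b2: "b2 \<in> C" "dist y b2 < d + e"
      using C by (subst (asm) cINF_less_iff) auto
    have m: "u *\<^sub>R b1 + v *\<^sub>R b2 \<in> C" using C(1) b1 b2 u v uv by (simp add: convex_def)
    have "dist (u *\<^sub>R x + v *\<^sub>R y) (u *\<^sub>R b1 + v *\<^sub>R b2)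
        = norm (u *\<^sub>R (x - b1) + v *\<^sub>R (y - b2))"
      by (simp add: dist_norm algebra_simps)
    also have "\<dots> \<le> norm (u *\<^sub>R (x - b1)) + norm (v *\<^sub>R (y - b2))" by (rule norm_triangle_ineq)
    also have "\<dots> = u * dist x b1 + v * dist y b2" using u v by (simp add: dist_norm)
    also have "\<dots> \<le> u * (d + e) + v * (d + e)"
      using b1 b2 u v by (intro add_mono mult_left_mono) auto
    also have "\<dots> = (u + v) * (d + e)" by (rule distrib_right[symmetric])
    also have "\<dots> = d + e" using uv by simp
    finally show ?thesis using m by (intro infdist_le2)
  qed
  then show "u *\<^sub>R x + v *\<^sub>R y \<in> {x. infdist x C \<le> d}"
    by (simp add: field_le_epsilon)
qed

lemma exc_hull:
  fixes P P' Q Q' :: "'k::real_normed_field set"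
  assumes P': "P' \<subseteq> closure (convex hull P)" and Q: "Q \<noteq> {}" and Q': "convex hull Q \<subseteq> Q'"
  shows "exc P' Q' \<le> exc P Q"
proof (cases "P = {}")
  case True
  then have "P' = {}" using P' by simp
  then show ?thesis by (simp add: exc_def)
next
  case P: False
  have hQ: "convex hull Q \<noteq> {}" using Q by simp
  have Q'ne: "Q' \<noteq> {}" using hQ Q' by auto
  show ?thesis
  proof (cases "exc P Q = \<infinity>")
    case True then show ?thesis by simp
  next
    case False
    have "0 \<le> exc P Q" using P by (rule exc_nonneg)
    with False obtain d where d: "exc P Q = ereal d" by (cases "exc P Q") auto
    define K where "K = {x. infdist x (convex hull Q) \<le> d}"
    have "P \<subseteq> K"
    proof
      fix a assume a: "a \<in> P"
      have "ereal (infdist a Q) \<le> exc P Q"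
        unfolding exc_infdist[OF Q] using a by (rule SUP_upper)
      then have "infdist a Q \<le> d" using d by simp
      moreover have "infdist a (convex hull Q) \<le> infdist a Q"
        by (rule infdist_mono[OF hull_subset Q])
      ultimately show "a \<in> K" unfolding K_def by simp
    qed
    moreover have "convex K" unfolding K_def by (rule convex_infdist_le) (use hQ in auto)
    ultimately have "convex hull P \<subseteq> K" by (rule hull_minimal)
    moreover have "closed K" unfolding K_def
      by (intro closed_Collect_le continuous_intros)
    ultimately have "closure (convex hull P) \<subseteq> K" by (rule closure_minimal)
    have "ereal (infdist a Q') \<le> ereal d" if a: "a \<in> P'" for a
    proof -
      have "infdist a Q' \<le> infdist a (convex hull Q)" by (rule infdist_mono[OF Q' hQ])
      also have "\<dots> \<le> d" using a P' \<open>closure (convex hull P) \<subseteq> K\<close> unfolding K_def by auto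
      finally show ?thesis by simp
    qed
    then show ?thesis unfolding exc_infdist[OF Q'ne] d by (rule SUP_least)
  qed
qed

definition ev :: "'x \<Rightarrow> ('x \<Rightarrow> 'k) set \<Rightarrow> 'k set" where
  "ev A S = (\<lambda>\<sigma>. \<sigma> A) ` S"

lemma dH_exc: "dH A F G = max (exc (ev A F) (ev A G)) (exc (ev A G) (ev A F))"
  unfolding dH_def exc_def ev_def by (simp add: image_comp o_def norm_minus_commute)

lemma dH_self: "dH A F F \<le> 0"
  unfolding dH_exc by (simp add: exc_self)

lemma dH_nonneg: "F \<noteq> {} \<Longrightarrow> 0 \<le> dH A F G"
  unfolding dH_exc ev_def by (simp add: exc_nonneg le_max_iff_disj)

lemma dH_triangle:
  assumes "G \<noteq> {}" shows "dH A F H \<le> dH A F G + dH A G H"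
proof -
  have G: "ev A G \<noteq> {}" using assms by (simp add: ev_def)
  have "exc (ev A F) (ev A H) \<le> dH A F G + dH A G H"
    using exc_triangle[OF G, of "ev A F" "ev A H"]
    by (rule order_trans) (intro add_mono; simp add: dH_exc)
  moreover have "exc (ev A H) (ev A F) \<le> dH A F G + dH A G H"
    using exc_triangle[OF G, of "ev A H" "ev A F"]
    by (rule order_trans) (subst add.commute, intro add_mono; simp add: dH_exc)
  ultimately show ?thesis by (simp add: dH_exc)
qed

lemma weak_star_eq: "weak_star smul = top_of_set (tdual smul)"
  unfolding weak_star_def euclidean_product_topology ..

lemma topspace_weak_star [simp]: "topspace (weak_star smul) = tdual smul"
  by (simp add: weak_star_eq)

lemma tdual_fconvex:
  fixes smul :: "'k::real_normed_field \<Rightarrow> 'a::{ab_group_add,t2_space} \<Rightarrow> 'a"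
  shows "fconvex (tdual smul)"
  unfolding fconvex_def tdual_def
proof (intro ballI allI impI, safe)
  fix \<sigma> \<tau> :: "'a \<Rightarrow> 'k" and t :: real
  assume s1: "\<forall>x y. \<sigma> (x + y) = \<sigma> x + \<sigma> y" and s2: "\<forall>a x. \<sigma> (smul a x) = a * \<sigma> x"
    and s3: "continuous_on UNIV \<sigma>"
    and t1: "\<forall>x y. \<tau> (x + y) = \<tau> x + \<tau> y" and t2: "\<forall>a x. \<tau> (smul a x) = a * \<tau> x"
    and t3: "continuous_on UNIV \<tau>"
  show "of_real t * \<sigma> (x + y) + of_real (1 - t) * \<tau> (x + y) =
        of_real t * \<sigma> x + of_real (1 - t) * \<tau> x + (of_real t * \<sigma> y + of_real (1 - t) * \<tau> y)" for x y
    using s1 t1 by (simp add: algebra_simps)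
  show "of_real t * \<sigma> (smul a x) + of_real (1 - t) * \<tau> (smul a x) =
        a * (of_real t * \<sigma> x + of_real (1 - t) * \<tau> x)" for a x
    using s2 t2 by (simp add: algebra_simps)
  show "continuous_on UNIV (\<lambda>x. of_real t * \<sigma> x + of_real (1 - t) * \<tau> x)"
    using s3 t3 by (intro continuous_intros)
qed

lemma dual_co_sub: "F \<subseteq> tdual smul \<Longrightarrow> dual_co smul F \<subseteq> tdual smul"
  unfolding dual_co_def using tdual_fconvex by blast

lemma dual_co_sup: "F \<subseteq> dual_co smul F"
  unfolding dual_co_def by blast

lemma dual_co_least: "C \<subseteq> tdual smul \<Longrightarrow> fconvex C \<Longrightarrow> F \<subseteq> C \<Longrightarrow> dual_co smul F \<subseteq> C"
  unfolding dual_co_def by blast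

lemma fconvex_Inter: "(\<And>C. C \<in> \<C> \<Longrightarrow> fconvex C) \<Longrightarrow> fconvex (\<Inter>\<C>)"
  unfolding fconvex_def by blast

lemma fconvex_Int: "fconvex C \<Longrightarrow> fconvex D \<Longrightarrow> fconvex (C \<inter> D)"
  unfolding fconvex_def by blast

lemma fconvex_dual_co: "fconvex (dual_co smul F)"
  unfolding dual_co_def by (rule fconvex_Inter) blast

lemma clco_eq: "F \<subseteq> tdual smul \<Longrightarrow> clco smul F = tdual smul \<inter> closure (dual_co smul F)"
  unfolding clco_def weak_star_eq closure_of_subtopology
  using dual_co_sub[of F smul] by (simp add: Int_absorb1)

lemma cont_comb: "continuous_on UNIV (\<lambda>\<sigma>::'a \<Rightarrow> 'k::real_normed_field. \<lambda>x. c * \<sigma> x + g x)"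
  by (intro continuous_on_coordinatewise_then_product continuous_intros continuous_on_product_coordinates)

lemma fconvex_closure:
  fixes S :: "('a \<Rightarrow> 'k::real_normed_field) set"
  assumes "fconvex S" shows "fconvex (closure S)"
  unfolding fconvex_def
proof (intro ballI allI impI)
  fix \<sigma> \<tau> and t :: real assume \<sigma>: "\<sigma> \<in> closure S" and \<tau>: "\<tau> \<in> closure S" and t: "0 \<le> t \<and> t \<le> 1"
  have cv: "(\<lambda>x. of_real t * \<sigma>' x + of_real (1 - t) * \<tau>' x) \<in> S" if "\<sigma>' \<in> S" "\<tau>' \<in> S" for \<sigma>' \<tau>'
    using assms that t unfolding fconvex_def by simp
  have step1: "(\<lambda>x. of_real t * \<sigma>' x + of_real (1 - t) * \<tau>' x) \<in> closure S"
    if "\<sigma>' \<in> closure S" "\<tau>' \<in> S" for \<sigma>' \<tau>'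
  proof -
    have "(\<lambda>\<sigma>. \<lambda>x. of_real t * \<sigma> x + of_real (1 - t) * \<tau>' x) ` closure S \<subseteq> closure S"
    proof (rule image_closure_subset)
      show "continuous_on (closure S) (\<lambda>\<sigma>. \<lambda>x. of_real t * \<sigma> x + of_real (1 - t) * \<tau>' x)"
        by (rule continuous_on_subset[OF cont_comb]) simp
      show "(\<lambda>\<sigma>. \<lambda>x. of_real t * \<sigma> x + of_real (1 - t) * \<tau>' x) ` S \<subseteq> closure S"
      proof (rule image_subsetI)
        fix \<rho> assume "\<rho> \<in> S"
        then have "(\<lambda>x. of_real t * \<rho> x + of_real (1 - t) * \<tau>' x) \<in> S" using cv that(2) by simp
        then show "(\<lambda>x. of_real t * \<rho> x + of_real (1 - t) * \<tau>' x) \<in> closure S"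
          using closure_subset by blast
      qed
    qed simp
    then show ?thesis using that(1) by (rule image_subset_iff[THEN iffD1, rule_format])
  qed
  have "(\<lambda>\<tau>. \<lambda>x. of_real (1 - t) * \<tau> x + of_real t * \<sigma> x) ` closure S \<subseteq> closure S"
  proof (rule image_closure_subset)
    show "continuous_on (closure S) (\<lambda>\<tau>. \<lambda>x. of_real (1 - t) * \<tau> x + of_real t * \<sigma> x)"
      by (rule continuous_on_subset[OF cont_comb]) simp
    show "(\<lambda>\<tau>. \<lambda>x. of_real (1 - t) * \<tau> x + of_real t * \<sigma> x) ` S \<subseteq> closure S"
    proof (rule image_subsetI)
      fix \<rho> assume "\<rho> \<in> S"
      from step1[OF \<sigma> this]
      show "(\<lambda>x. of_real (1 - t) * \<rho> x + of_real t * \<sigma> x) \<in> closure S"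
        by (simp add: add.commute)
    qed
  qed simp
  then have "(\<lambda>x. of_real (1 - t) * \<tau> x + of_real t * \<sigma> x) \<in> closure S"
    using \<tau> by (rule image_subset_iff[THEN iffD1, rule_format])
  then show "(\<lambda>x. of_real t * \<sigma> x + of_real (1 - t) * \<tau> x) \<in> closure S"
    by (simp add: add.commute)
qed

lemma fconvex_clco: "F \<subseteq> tdual smul \<Longrightarrow> fconvex (clco smul F)"
  by (simp add: clco_eq fconvex_Int tdual_fconvex fconvex_closure fconvex_dual_co)

lemma ev_clco_sub:
  fixes smul :: "'k::real_normed_field \<Rightarrow> 'a::{ab_group_add,t2_space} \<Rightarrow> 'a"
  assumes F: "F \<subseteq> tdual smul"
  shows "ev A (clco smul F) \<subseteq> closure (convex hull (ev A F))"
proof -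
  define K where "K = closure (convex hull (ev A F))"
  have K: "convex K" "closed K" unfolding K_def by (auto intro: convex_closure)
  define S where "S = tdual smul \<inter> {\<sigma>. \<sigma> A \<in> K}"
  have "fconvex S"
    unfolding S_def
  proof (rule fconvex_Int[OF tdual_fconvex])
    show "fconvex {\<sigma>. \<sigma> A \<in> K}"
      unfolding fconvex_def
    proof (intro ballI allI impI)
      fix \<sigma> \<tau> :: "'a \<Rightarrow> 'k" and t :: real
      assume "\<sigma> \<in> {\<sigma>. \<sigma> A \<in> K}" "\<tau> \<in> {\<sigma>. \<sigma> A \<in> K}" "0 \<le> t \<and> t \<le> 1"
      then have "t *\<^sub>R \<sigma> A + (1 - t) *\<^sub>R \<tau> A \<in> K" using K(1) by (simp add: convex_def)
      then show "(\<lambda>x. of_real t * \<sigma> x + of_real (1 - t) * \<tau> x) \<in> {\<sigma>. \<sigma> A \<in> K}"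
        by (simp add: scaleR_conv_of_real)
    qed
  qed
  moreover have "F \<subseteq> S" using F hull_subset closure_subset unfolding S_def K_def ev_def by fastforce
  ultimately have "dual_co smul F \<subseteq> S" by (intro dual_co_least) (auto simp: S_def)
  moreover have "closed {\<sigma>::'a \<Rightarrow> 'k. \<sigma> A \<in> K}"
    using closed_vimage[OF K(2) continuous_on_product_coordinates[of A]] by (simp add: vimage_def)
  ultimately have "closure (dual_co smul F) \<subseteq> {\<sigma>. \<sigma> A \<in> K}"
    by (intro closure_minimal) (auto simp: S_def)
  then show ?thesis unfolding clco_eq[OF F] K_def ev_def by auto
qed

lemma hull_ev_sub:
  fixes smul :: "'k::real_normed_field \<Rightarrow> 'a::{ab_group_add,t2_space} \<Rightarrow> 'a"
  assumes F: "F \<subseteq> tdual smul"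
  shows "convex hull (ev A F) \<subseteq> ev A (clco smul F)"
proof -
  have "convex (ev A (dual_co smul F))"
  proof (rule convexI)
    fix x y :: 'k and u v :: real
    assume "x \<in> ev A (dual_co smul F)" "y \<in> ev A (dual_co smul F)" "0 \<le> u" "0 \<le> v" "u + v = 1"
    then obtain \<sigma> \<tau> where st: "\<sigma> \<in> dual_co smul F" "\<tau> \<in> dual_co smul F" "x = \<sigma> A" "y = \<tau> A"
      and uv: "0 \<le> u" "u \<le> 1" "v = 1 - u" unfolding ev_def by auto
    then have "(\<lambda>x. of_real u * \<sigma> x + of_real (1 - u) * \<tau> x) \<in> dual_co smul F"
      using fconvex_dual_co unfolding fconvex_def by blast
    then show "u *\<^sub>R x + v *\<^sub>R y \<in> ev A (dual_co smul F)"
      unfolding ev_def using st uv by (force simp: scaleR_conv_of_real)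
  qed
  moreover have "ev A F \<subseteq> ev A (dual_co smul F)" using dual_co_sup unfolding ev_def by blast
  ultimately have "convex hull (ev A F) \<subseteq> ev A (dual_co smul F)" by (rule hull_minimal[rotated])
  also have "\<dots> \<subseteq> ev A (clco smul F)"
    unfolding clco_def ev_def using closure_of_subset[of "dual_co smul F" "weak_star smul"] dual_co_sub[OF F]
    by auto
  finally show ?thesis .
qed

lemma dH_clco:
  assumes F: "F \<subseteq> tdual smul" "F \<noteq> {}" and G: "G \<subseteq> tdual smul" "G \<noteq> {}"
  shows "dH A (clco smul F) (clco smul G) \<le> dH A F G"
proof -
  have Fe: "ev A F \<noteq> {}" and Ge: "ev A G \<noteq> {}" using F G by (auto simp: ev_def)
  have "exc (ev A (clco smul F)) (ev A (clco smul G)) \<le> exc (ev A F) (ev A G)"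
    by (rule exc_hull[OF ev_clco_sub[OF F(1)] Ge hull_ev_sub[OF G(1)]])
  moreover have "exc (ev A (clco smul G)) (ev A (clco smul F)) \<le> exc (ev A G) (ev A F)"
    by (rule exc_hull[OF ev_clco_sub[OF G(1)] Fe hull_ev_sub[OF F(1)]])
  ultimately show ?thesis unfolding dH_exc by (auto simp: le_max_iff_disj)
qed


lemma hyper_union:
  fixes S :: "('a \<Rightarrow> 'k::real_normed_field) set set"
  shows "\<Union>{{G \<in> S. dH A F G < ereal \<epsilon>} | F A \<epsilon>. F \<in> S \<and> \<epsilon> > 0} = S"
proof
  show "S \<subseteq> \<Union>{{G \<in> S. dH A F G < ereal \<epsilon>} | F A \<epsilon>. F \<in> S \<and> \<epsilon> > 0}"
  proof
    fix F assume F: "F \<in> S"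
    have "dH undefined F F < ereal 1" using dH_self[of undefined F]
      by (meson order_le_less_trans ereal_less(2) zero_less_one zero_ereal_def)
    then have "F \<in> {G \<in> S. dH undefined F G < ereal 1}" using F by simp
    moreover have "{G \<in> S. dH undefined F G < ereal 1} \<in> {{G \<in> S. dH A F G < ereal \<epsilon>} | F A \<epsilon>. F \<in> S \<and> \<epsilon> > 0}"
      using F by (intro CollectI exI[of _ F] exI[of _ undefined] exI[of _ "1::real"]) simp
    ultimately show "F \<in> \<Union>{{G \<in> S. dH A F G < ereal \<epsilon>} | F A \<epsilon>. F \<in> S \<and> \<epsilon> > 0}"
      by (rule UnionI[rotated])
  qed
qed (rule Union_least, auto)

lemma topspace_hyper: "topspace (hyper_top S) = S"
  unfolding hyper_top_def topology_generated_by_topspace by (rule hyper_union)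

lemma hyper_cont:
  fixes h :: "('a \<Rightarrow> 'k::real_normed_field) set \<Rightarrow> ('a \<Rightarrow> 'k) set"
  assumes h: "\<And>F. F \<in> S1 \<Longrightarrow> h F \<in> S2"
   and ne1: "\<And>F. F \<in> S1 \<Longrightarrow> F \<noteq> {}" and ne2: "\<And>F. F \<in> S2 \<Longrightarrow> F \<noteq> {}"
   and lip: "\<And>F G A. F \<in> S1 \<Longrightarrow> G \<in> S1 \<Longrightarrow> dH A (h F) (h G) \<le> dH A F G"
  shows "continuous_map (hyper_top S1) (hyper_top S2) h"
  unfolding hyper_top_def[of S2]
proof (rule continuous_on_generated_topo)
  fix U assume "U \<in> {{G \<in> S2. dH A F G < ereal \<epsilon>} | F A \<epsilon>. F \<in> S2 \<and> \<epsilon> > 0}"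
  then obtain C A \<epsilon> where U: "U = {G \<in> S2. dH A C G < ereal \<epsilon>}" and C: "C \<in> S2" and e: "\<epsilon> > 0"
    by blast
  show "openin (hyper_top S1) (h -` U \<inter> topspace (hyper_top S1))"
    unfolding topspace_hyper
  proof (subst openin_subopen, intro ballI)
    fix F0 assume F0: "F0 \<in> h -` U \<inter> S1"
    then have F0S: "F0 \<in> S1" and lt: "dH A C (h F0) < ereal \<epsilon>" using U by auto
    have "0 \<le> dH A C (h F0)" using ne2[OF C] by (rule dH_nonneg)
    with lt obtain r where r: "dH A C (h F0) = ereal r" "r < \<epsilon>"
      by (cases "dH A C (h F0)") auto
    define T where "T = {G \<in> S1. dH A F0 G < ereal (\<epsilon> - r)}"
    have "openin (hyper_top S1) T"
      unfolding hyper_top_def T_def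
      by (rule topology_generated_by_Basis) (use F0S r in \<open>intro CollectI exI[of _ F0] exI[of _ A] exI[of _ "\<epsilon> - r"], auto\<close>)
    moreover have "F0 \<in> T"
    proof -
      have "dH A F0 F0 < ereal (\<epsilon> - r)" using dH_self[of A F0] r(2)
        by (meson order_le_less_trans ereal_less(2) diff_gt_0_iff_gt zero_ereal_def)
      then show ?thesis using F0S by (simp add: T_def)
    qed
    moreover have "T \<subseteq> h -` U \<inter> S1"
    proof
      fix G assume G: "G \<in> T"
      then have GS: "G \<in> S1" and lt2: "dH A F0 G < ereal (\<epsilon> - r)" by (auto simp: T_def)
      have "dH A C (h G) \<le> dH A C (h F0) + dH A (h F0) (h G)"
        by (rule dH_triangle) (use ne2[OF h[OF F0S]] in simp)
      also have "\<dots> \<le> ereal r + dH A F0 G" using r lip[OF F0S GS, of A] by (simp add: add_left_mono)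
      also have "\<dots> < ereal \<epsilon>" using lt2 by (cases "dH A F0 G") auto
      finally show "G \<in> h -` U \<inter> S1" using GS h[OF GS] U by auto
    qed
    ultimately show "\<exists>T. openin (hyper_top S1) T \<and> F0 \<in> T \<and> T \<subseteq> h -` U \<inter> S1" by blast
  qed
next
  show "h ` topspace (hyper_top S1) \<subseteq> \<Union>{{G \<in> S2. dH A F G < ereal \<epsilon>} | F A \<epsilon>. F \<in> S2 \<and> \<epsilon> > 0}"
    unfolding hyper_union topspace_hyper using h by blast
qed

lemma Fsets_sub: "F \<in> Fsets smul \<Longrightarrow> F \<subseteq> tdual smul"
  unfolding Fsets_def using closedin_subset[of "weak_star smul" F] by simp

lemma clco_in_CF:
  assumes F: "F \<in> Fsets smul" shows "clco smul F \<in> CFsets smul"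
proof -
  have Ft: "F \<subseteq> tdual smul" using F by (rule Fsets_sub)
  have "F \<subseteq> clco smul F"
    unfolding clco_def using dual_co_sup[of F smul] closure_of_subset[of "dual_co smul F" "weak_star smul"]
      dual_co_sub[OF Ft] by simp
  then have "clco smul F \<noteq> {}" using F by (auto simp: Fsets_def)
  then show ?thesis
    unfolding CFsets_def Fsets_def using fconvex_clco[OF Ft] by (simp add: clco_def)
qed

lemma clco_CF:
  assumes C: "C \<in> CFsets smul" shows "clco smul C = C"
proof -
  have CF: "C \<in> Fsets smul" using C by (simp add: CFsets_def)
  have Ct: "C \<subseteq> tdual smul" by (rule Fsets_sub[OF CF])
  have "dual_co smul C = C"
    using dual_co_least[OF Ct _ order_refl] dual_co_sup[of C smul] C by (auto simp: CFsets_def)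
  then show ?thesis using C unfolding clco_def by (simp add: CFsets_def Fsets_def closure_of_closedin)
qed

lemma main:
  fixes smul :: "'k::real_normed_field \<Rightarrow> 'a::{ab_group_add,t2_space} \<Rightarrow> 'a"
  shows "clco smul ` Fsets smul = CFsets smul \<and>
         continuous_map (hyper_top (Fsets smul)) (hyper_top (CFsets smul)) (clco smul)"
proof
  show "clco smul ` Fsets smul = CFsets smul"
  proof
    show "clco smul ` Fsets smul \<subseteq> CFsets smul" using clco_in_CF by blast
    show "CFsets smul \<subseteq> clco smul ` Fsets smul"
    proof
      fix C assume C: "C \<in> CFsets smul"
      then have "C = clco smul C" by (simp add: clco_CF)
      moreover have "C \<in> Fsets smul" using C by (simp add: CFsets_def)
      ultimately show "C \<in> clco smul ` Fsets smul" by blast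
    qed
  qed
  show "continuous_map (hyper_top (Fsets smul)) (hyper_top (CFsets smul)) (clco smul)"
  proof (rule hyper_cont)
    show "clco smul F \<in> CFsets smul" if "F \<in> Fsets smul" for F using that by (rule clco_in_CF)
    show "F \<noteq> {}" if "F \<in> Fsets smul" for F using that by (simp add: Fsets_def)
    show "F \<noteq> {}" if "F \<in> CFsets smul" for F using that by (simp add: CFsets_def Fsets_def)
    show "dH A (clco smul F) (clco smul G) \<le> dH A F G" if "F \<in> Fsets smul" "G \<in> Fsets smul" for F G A
      using that by (intro dH_clco Fsets_sub) (auto simp: Fsets_def)
  qed
qed

theorem proposition3p12:
  fixes smulR :: "real \<Rightarrow> 'x::{ab_group_add,t2_space} \<Rightarrow> 'x"
    and smulC :: "complex \<Rightarrow> 'y::{ab_group_add,t2_space} \<Rightarrow> 'y"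
  shows "(tvs smulR \<and> dual_separates smulR \<longrightarrow>
            clco smulR ` Fsets smulR = CFsets smulR \<and>
            continuous_map (hyper_top (Fsets smulR)) (hyper_top (CFsets smulR)) (clco smulR))
       \<and> (tvs smulC \<and> dual_separates smulC \<longrightarrow>
            clco smulC ` Fsets smulC = CFsets smulC \<and>
            continuous_map (hyper_top (Fsets smulC)) (hyper_top (CFsets smulC)) (clco smulC))"
  using main[of smulR] main[of smulC] by blast

end
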